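(* Let $G$ be a finite group and $p$ a prime divisor of $|G|$. Suppose that $\mathrm{pr}^*_G(p,p')>\frac{p+q-1}{pq}$, where $q$ is the smallest prime in $\pi(G)\setminus\{p\}$. Then $G=O_p(G)\times O_{p'}(G)$.
   Context: For subsets $X,Y$ of a finite group $G$, $\Pr(X,Y)=|\{(x,y)\in X\times Y: xy=yx\}|/(|X||Y|)$. For sets of primes $\pi_1,\pi_2$, $\mathrm{pr}^*_G(\pi_1,\pi_2)$ denotes the maximum real number $\epsilon$ such that for every pair of distinct primes $r\in\pi_1$, $s\in\pi_2$ there exist a Sylow $r$-subgroup $R$ and a Sylow $s$-subgroup $S$ of $G$ with $\Pr(R,S)\ge\epsilon$ (the Sylow subgroup for a prime not dividing $|G|$ is trivial); $\mathrm{pr}^*_G(p,\pi_2)=\mathrm{pr}^*_G(\{p\},\pi_2)$. $p'$ denotes the set of primes different from $p$. $\pi(G)$ is the set of prime divisors of $|G|$. *)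

theory Defs
  imports Complex_Main "HOL-Algebra.Algebra"
begin

definition comm_prob :: "('a, 'b) monoid_scheme \<Rightarrow> 'a set \<Rightarrow> 'a set \<Rightarrow> real" where
  "comm_prob G A B =
     real (card {(x, y) \<in> Sigma A (\<lambda>_. B). monoid.mult G x y = monoid.mult G y x}) / (real (card A) * real (card B))"

text \<open>Sylow r-subgroup of a finite group: subgroup of order the full r-part of |G|
  (the trivial subgroup if r does not divide |G|).\<close>
definition sylow_subgroup :: "('a, 'b) monoid_scheme \<Rightarrow> nat \<Rightarrow> 'a set \<Rightarrow> bool" where
  "sylow_subgroup G r P \<longleftrightarrow> subgroup P G \<and> card P = r ^ multiplicity r (order G)"

definition pr_star :: "('a, 'b) monoid_scheme \<Rightarrow> nat set \<Rightarrow> nat set \<Rightarrow> real" where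
  "pr_star G \<pi>1 \<pi>2 = (GREATEST \<epsilon>. \<forall>r s. r \<in> \<pi>1 \<and> s \<in> \<pi>2 \<and> Factorial_Ring.prime r \<and> Factorial_Ring.prime s \<and> r \<noteq> s \<longrightarrow>
       (\<exists>R S. sylow_subgroup G r R \<and> sylow_subgroup G s S \<and> comm_prob G R S \<ge> \<epsilon>))"

definition primes_except :: "nat \<Rightarrow> nat set" where
  "primes_except p = {r. Factorial_Ring.prime r \<and> r \<noteq> p}"

definition prime_divs :: "('a, 'b) monoid_scheme \<Rightarrow> nat set" where
  "prime_divs G = {r. Factorial_Ring.prime r \<and> r dvd order G}"

definition pi_subgroup :: "('a, 'b) monoid_scheme \<Rightarrow> nat set \<Rightarrow> 'a set \<Rightarrow> bool" where
  "pi_subgroup G \<pi> H \<longleftrightarrow> subgroup H G \<and> (\<forall>r. Factorial_Ring.prime r \<and> r dvd card H \<longrightarrow> r \<in> \<pi>)"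

definition O_pi :: "('a, 'b) monoid_scheme \<Rightarrow> nat set \<Rightarrow> 'a set" where
  "O_pi G \<pi> = generate G (\<Union>{N. normal N G \<and> pi_subgroup G \<pi> N})"

end

theory Submission
  imports Defs
begin


lemma (in group) ord_dvd_subgroup_card:
  assumes fin: "finite (carrier G)" and H: "subgroup H G" and x: "x \<in> H"
  shows "ord x dvd card H"
proof -
  interpret H: group "G\<lparr>carrier := H\<rparr>" using subgroup_imp_group[OF H] .
  have "x [^]\<^bsub>G\<lparr>carrier := H\<rparr>\<^esub> (order (G\<lparr>carrier := H\<rparr>)) = \<one>"
    using H.pow_order_eq_1[of x] x by simp
  hence "x [^] card H = \<one>"
    unfolding order_def by (simp add: nat_pow_consistent[symmetric])
  moreover have "x \<in> carrier G" using subgroup.mem_carrier[OF H x] .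
  ultimately show ?thesis using pow_eq_id by blast
qed

lemma (in group) in_normal_if_coprime:
  assumes fin: "finite (carrier G)" and N: "N \<lhd> G" and x: "x \<in> carrier G"
    and cop: "coprime (ord x) (card (rcosets N))"
  shows "x \<in> N"
proof -
  interpret N: normal N G using N .
  interpret Q: group "G Mod N" using N.factorgroup_is_group .
  have hom: "(\<lambda>a. N #> a) \<in> hom G (G Mod N)" using N.r_coset_hom_Mod .
  have yc: "N #> x \<in> carrier (G Mod N)" using hom x by (auto simp: hom_def)
  have "(N #> x) [^]\<^bsub>G Mod N\<^esub> ord x = N #> (x [^] ord x)"
    using hom_nat_pow[OF hom x is_group Q.is_group] by simp
  also have "\<dots> = N" using x N.subgroup_axioms by (simp add: coset_join2)
  finally have 1: "(N #> x) [^]\<^bsub>G Mod N\<^esub> ord x = \<one>\<^bsub>G Mod N\<^esub>" by simp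
  have "(N #> x) [^]\<^bsub>G Mod N\<^esub> order (G Mod N) = \<one>\<^bsub>G Mod N\<^esub>"
    using Q.pow_order_eq_1 yc by blast
  hence 2: "(N #> x) [^]\<^bsub>G Mod N\<^esub> card (rcosets N) = \<one>\<^bsub>G Mod N\<^esub>"
    by (simp add: order_def FactGroup_def)
  have "Q.ord (N #> x) dvd ord x" "Q.ord (N #> x) dvd card (rcosets N)"
    using 1 2 Q.pow_eq_id yc by blast+
  hence "Q.ord (N #> x) = 1" using cop
    by (meson coprime_common_divisor_nat)
  hence "N #> x = N" using Q.ord_eq_1 yc by simp
  thus ?thesis using coset_join1 x N.subgroup_axioms by blast
qed



lemma (in group) coset_action_hom:
  assumes Q: "subgroup Q G" and P: "subgroup P G"
  shows "group_hom (G\<lparr>carrier := P\<rparr>) (BijGroup (rcosets Q)) (\<lambda>h. restrict (\<lambda>M. M #> inv h) (rcosets Q))"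
proof -
  let ?E = "rcosets Q"
  let ?\<phi> = "\<lambda>h. restrict (\<lambda>M. M #> inv h) (rcosets Q)"
  have Qs: "Q \<subseteq> carrier G" using Q subgroup.subset by blast
  have Ps: "P \<subseteq> carrier G" using P subgroup.subset by blast
  have cl: "Y #> g \<in> ?E" if Y: "Y \<in> ?E" and g: "g \<in> carrier G" for Y g
  proof -
    obtain a where a: "a \<in> carrier G" "Y = Q #> a" using Y by (auto simp: RCOSETS_def)
    have "Y #> g = Q #> (a \<otimes> g)" using a g Qs coset_mult_assoc by simp
    thus ?thesis using a g Qs rcosetsI by simp
  qed
  have sub: "Y \<subseteq> carrier G" if "Y \<in> ?E" for Y
    using that Qs unfolding RCOSETS_def r_coset_def by auto
  have bij: "?\<phi> h \<in> Bij ?E" if h: "h \<in> P" for h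
  proof -
    have hc: "h \<in> carrier G" using h Ps by blast
    have "bij_betw (\<lambda>M. M #> inv h) ?E ?E"
    proof (rule bij_betw_byWitness[where f' = "\<lambda>M. M #> h"])
      show "\<forall>a\<in>?E. a #> inv h #> h = a" using hc sub coset_mult_assoc by simp
      show "\<forall>a\<in>?E. a #> h #> inv h = a" using hc sub coset_mult_assoc by simp
      show "(\<lambda>M. M #> inv h) ` ?E \<subseteq> ?E" using cl hc by auto
      show "(\<lambda>M. M #> h) ` ?E \<subseteq> ?E" using cl hc by auto
    qed
    hence "bij_betw (?\<phi> h) ?E ?E" by (rule bij_betw_cong[THEN iffD1, rotated]) simp
    thus ?thesis unfolding Bij_def by simp
  qed
  have "?\<phi> \<in> hom (G\<lparr>carrier := P\<rparr>) (BijGroup ?E)"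
  proof (rule homI)
    show "?\<phi> h \<in> carrier (BijGroup ?E)" if "h \<in> carrier (G\<lparr>carrier := P\<rparr>)" for h
      using bij that by (simp add: BijGroup_def)
    show "?\<phi> (x \<otimes>\<^bsub>G\<lparr>carrier := P\<rparr>\<^esub> y) = ?\<phi> x \<otimes>\<^bsub>BijGroup ?E\<^esub> ?\<phi> y"
      if "x \<in> carrier (G\<lparr>carrier := P\<rparr>)" "y \<in> carrier (G\<lparr>carrier := P\<rparr>)" for x y
    proof -
      have xy: "x \<in> P" "y \<in> P" using that by auto
      hence xc: "x \<in> carrier G" "y \<in> carrier G" using Ps by auto
      have "?\<phi> x \<otimes>\<^bsub>BijGroup ?E\<^esub> ?\<phi> y = compose ?E (?\<phi> x) (?\<phi> y)"
        using bij xy by (simp add: BijGroup_def)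
      also have "\<dots> = ?\<phi> (x \<otimes> y)"
      proof
        fix Y show "compose ?E (?\<phi> x) (?\<phi> y) Y = ?\<phi> (x \<otimes> y) Y"
          using xc cl sub coset_mult_assoc by (simp add: compose_def inv_mult_group)
      qed
      finally show ?thesis by simp
    qed
  qed
  thus ?thesis
    unfolding group_hom_def group_hom_axioms_def
    using subgroup_imp_group[OF P] group_BijGroup by blast
qed

lemma (in group) sylow_conj:
  assumes fin: "finite (carrier G)" and p: "Factorial_Ring.prime (p::nat)"
    and Q: "subgroup Q G" and P: "subgroup P G" and cP: "card P = p ^ a"
    and ndvd: "\<not> p dvd card (rcosets Q)"
  shows "\<exists>g\<in>carrier G. \<forall>h\<in>P. g \<otimes> h \<otimes> inv g \<in> Q"
proof -
  let ?E = "rcosets Q"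
  let ?P = "G\<lparr>carrier := P\<rparr>"
  let ?\<phi> = "\<lambda>h. restrict (\<lambda>M. M #> inv h) (rcosets Q)"
  interpret A: group_action ?P ?E ?\<phi>
    using coset_action_hom[OF Q P] by (simp add: group_action_def)
  have Qs: "Q \<subseteq> carrier G" using Q subgroup.subset by blast
  have Ps: "P \<subseteq> carrier G" using P subgroup.subset by blast
  have finE: "finite ?E"
  proof -
    have "?E \<subseteq> Pow (carrier G)" using Qs by (auto simp: RCOSETS_def r_coset_def)
    thus ?thesis using fin finite_subset by blast
  qed
  have osz: "card Ob = 1 \<or> p dvd card Ob" if Ob: "Ob \<in> orbits ?P ?E ?\<phi>" for Ob
  proof -
    obtain x where x: "x \<in> ?E" "Ob = orbit ?P ?\<phi> x" using Ob unfolding orbits_def by blast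
    have "card Ob * card (stabilizer ?P ?\<phi> x) = p ^ a"
      using A.orbit_stabilizer_theorem[OF x(1)] x(2) cP by (simp add: order_def)
    hence "card Ob dvd p ^ a" by (metis dvd_triv_left)
    then obtain i where "card Ob = p ^ i" using divides_primepow_nat[OF p] by blast
    thus ?thesis by (cases i) auto
  qed
  have "\<exists>Ob\<in>orbits ?P ?E ?\<phi>. card Ob = 1"
  proof (rule ccontr)
    assume "\<not> ?thesis"
    hence all: "\<forall>Ob\<in>orbits ?P ?E ?\<phi>. p dvd card Ob" using osz by blast
    have "card ?E = (\<Sum>Ob\<in>orbits ?P ?E ?\<phi>. \<Sum>x\<in>Ob. (1::nat))"
      using A.disjoint_sum[OF finE, of "\<lambda>_. (1::nat)"] by simp
    also have "\<dots> = (\<Sum>Ob\<in>orbits ?P ?E ?\<phi>. card Ob)" by simp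
    finally have "p dvd card ?E" using all by (simp add: dvd_sum)
    thus False using ndvd by simp
  qed
  then obtain x where x: "x \<in> ?E" "card (orbit ?P ?\<phi> x) = 1"
    unfolding orbits_def by blast
  have xo: "x \<in> orbit ?P ?\<phi> x" using A.orbit_refl[OF x(1)] .
  have fixd: "x #> inv h = x" if h: "h \<in> P" for h
  proof -
    have "?\<phi> h x \<in> orbit ?P ?\<phi> x" using h unfolding orbit_def by auto
    hence "?\<phi> h x = x" using x(2) xo by (metis card_1_singletonE singletonD)
    thus ?thesis using x(1) by simp
  qed
  obtain g where g: "g \<in> carrier G" "x = Q #> g" using x(1) by (auto simp: RCOSETS_def)
  have "g \<otimes> h \<otimes> inv g \<in> Q" if h: "h \<in> P" for h
  proof -
    have hc: "h \<in> carrier G" using h Ps by blast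
    have "inv h \<in> P" using subgroup.m_inv_closed[OF P h] .
    hence "Q #> g #> inv (inv h) = Q #> g" using fixd g(2) by simp
    hence "Q #> (g \<otimes> h) = Q #> g" using hc g(1) Qs coset_mult_assoc by simp
    hence "Q #> (g \<otimes> h \<otimes> inv g) = Q"
      using coset_mult_inv2[of Q "g \<otimes> h" g] hc g(1) Qs by simp
    thus ?thesis using coset_join1[OF _ _ Q] hc g(1) by simp
  qed
  thus ?thesis using g(1) by blast
qed



lemma (in group) central_complement:
  assumes fin: "finite (carrier G)" and C: "subgroup C G" and Z: "subgroup Z G"
    and ZC: "Z \<subseteq> C"
    and cen: "\<And>z g. z \<in> Z \<Longrightarrow> g \<in> C \<Longrightarrow> z \<otimes> g = g \<otimes> z"
    and injp: "\<And>z. z \<in> Z \<Longrightarrow> z [^] card ((\<lambda>g. Z #> g) ` C) = \<one> \<Longrightarrow> z = \<one>"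
  shows "\<exists>K. subgroup K G \<and> K \<subseteq> C \<and> K \<inter> Z = {\<one>} \<and> (\<forall>g\<in>C. \<exists>k\<in>K. \<exists>z\<in>Z. g = k \<otimes> z)
            \<and> (\<forall>g\<in>C. \<forall>k\<in>K. g \<otimes> k \<otimes> inv g \<in> K)"
proof -
  define E where "E = (\<lambda>g. Z #> g) ` C"
  define rep where "rep Y = (SOME y. y \<in> Y)" for Y :: "'a set"
  define fac where "fac Y g = rep Y \<otimes> g \<otimes> inv (rep (Z #> (rep Y \<otimes> g)))" for Y g
  define ZG where "ZG = G\<lparr>carrier := Z\<rparr>"
  define V where "V g = finprod ZG (\<lambda>Y. fac Y g) E" for g
  have Cs: "C \<subseteq> carrier G" using C subgroup.subset by blast
  have Zs: "Z \<subseteq> carrier G" using Z subgroup.subset by blast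
  have Cc: "g \<in> carrier G" if "g \<in> C" for g using that Cs by blast
  have Zc: "z \<in> carrier G" if "z \<in> Z" for z using that Zs by blast
  have Cm: "g \<otimes> h \<in> C" if "g \<in> C" "h \<in> C" for g h using subgroup.m_closed[OF C that] .
  have Ci: "inv g \<in> C" if "g \<in> C" for g using subgroup.m_inv_closed[OF C that] .
  have Zm: "g \<otimes> h \<in> Z" if "g \<in> Z" "h \<in> Z" for g h using subgroup.m_closed[OF Z that] .
  have Zi: "inv g \<in> Z" if "g \<in> Z" for g using subgroup.m_inv_closed[OF Z that] .
  interpret ZG: group ZG unfolding ZG_def using subgroup_imp_group[OF Z] .
  interpret ZG: comm_group ZG
    by (rule ZG.group_comm_groupI) (simp add: ZG_def, metis cen ZC subsetD)
  have finE: "finite E" unfolding E_def using fin Cs finite_subset by blast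
  have repin: "rep (Z #> u) \<in> Z #> u" if u: "u \<in> C" for u
  proof -
    have "u \<in> Z #> u" using rcos_self[OF Cc[OF u] Z] .
    thus ?thesis unfolding rep_def by (metis someI_ex)
  qed
  have f3: "rep (Z #> u) \<in> C \<and> u \<otimes> inv (rep (Z #> u)) \<in> Z \<and> Z #> rep (Z #> u) = Z #> u"
    if u: "u \<in> C" for u
  proof -
    obtain z where z: "z \<in> Z" "rep (Z #> u) = z \<otimes> u"
      using repin[OF u] unfolding r_coset_def by blast
    have "rep (Z #> u) \<in> C" using z Cm[OF _ u] ZC by auto
    moreover have "u \<otimes> inv (rep (Z #> u)) = inv z"
      using z Zc[OF z(1)] Cc[OF u] by (simp add: inv_mult_group m_assoc[symmetric])
    moreover have "Z #> rep (Z #> u) = Z #> u"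
      using repr_independence[OF repin[OF u] Cc[OF u] Z] by simp
    ultimately show ?thesis using Zi[OF z(1)] by simp
  qed
  have f2: "rep Y \<in> C \<and> Y = Z #> rep Y" if Y: "Y \<in> E" for Y
    using Y f3 unfolding E_def by auto
  have f4: "fac Y g \<in> Z" if "Y \<in> E" "g \<in> C" for Y g
  proof -
    have "rep Y \<otimes> g \<in> C" using f2 that Cm by blast
    thus ?thesis unfolding fac_def using f3 by blast
  qed
  have f5: "Y #> g = Z #> (rep Y \<otimes> g)" if "Y \<in> E" "g \<in> C" for Y g
    using f2[OF that(1)] that Cc Zs coset_mult_assoc by metis
  have f5': "Y #> g \<in> E" if "Y \<in> E" "g \<in> C" for Y g
    using f5[OF that] f2[OF that(1)] that(2) Cm unfolding E_def by blast
  have f6: "fac Y (g \<otimes> h) = fac Y g \<otimes> fac (Y #> g) h" if Y: "Y \<in> E" and g: "g \<in> C" and h: "h \<in> C" for Y g h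
  proof -
    define u where "u = rep Y \<otimes> g"
    define w where "w = rep (Z #> u)"
    have uC: "u \<in> C" unfolding u_def using f2[OF Y] g Cm by blast
    have wC: "w \<in> C" and wZ: "Z #> w = Z #> u" unfolding w_def using f3[OF uC] by auto
    have r: "rep (Y #> g) = w" unfolding w_def u_def using f5[OF Y g] by simp
    have "Z #> (w \<otimes> h) = Z #> (u \<otimes> h)"
      using wZ coset_mult_assoc[OF Zs Cc[OF wC] Cc[OF h]] coset_mult_assoc[OF Zs Cc[OF uC] Cc[OF h]] by simp
    hence "fac (Y #> g) h = w \<otimes> h \<otimes> inv (rep (Z #> (u \<otimes> h)))"
      unfolding fac_def r by simp
    moreover have "fac Y g = u \<otimes> inv w" unfolding fac_def u_def w_def by simp
    moreover have "fac Y (g \<otimes> h) = u \<otimes> h \<otimes> inv (rep (Z #> (u \<otimes> h)))"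
      unfolding fac_def u_def using f2[OF Y] g h Cc by (simp add: m_assoc)
    moreover have "rep (Z #> (u \<otimes> h)) \<in> carrier G" using f3[OF Cm[OF uC h]] Cc by blast
    ultimately show ?thesis using Cc[OF uC] Cc[OF wC] Cc[OF h]
      by (simp add: m_assoc[symmetric]) (simp add: m_assoc)
  qed
  have bij: "(\<lambda>Y. Y #> g) ` E = E" "inj_on (\<lambda>Y. Y #> g) E" if g: "g \<in> C" for g
  proof -
    have sub: "Y \<subseteq> carrier G" if "Y \<in> E" for Y
      using that Zs Cs unfolding E_def r_coset_def by auto
    show "inj_on (\<lambda>Y. Y #> g) E"
    proof (rule inj_onI)
      fix Y1 Y2 assume "Y1 \<in> E" "Y2 \<in> E" "Y1 #> g = Y2 #> g"
      hence "Y1 #> g #> inv g = Y2 #> g #> inv g" by simp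
      thus "Y1 = Y2" using sub \<open>Y1 \<in> E\<close> \<open>Y2 \<in> E\<close> Cc[OF g] by (simp add: coset_mult_assoc)
    qed
    show "(\<lambda>Y. Y #> g) ` E = E"
    proof
      show "(\<lambda>Y. Y #> g) ` E \<subseteq> E" using f5' g by blast
      show "E \<subseteq> (\<lambda>Y. Y #> g) ` E"
      proof
        fix Y assume Y: "Y \<in> E"
        have "Y #> inv g \<in> E" using f5'[OF Y Ci[OF g]] .
        moreover have "Y = (Y #> inv g) #> g" using sub[OF Y] Cc[OF g] by (simp add: coset_mult_assoc)
        ultimately show "Y \<in> (\<lambda>Y. Y #> g) ` E" by blast
      qed
    qed
  qed
  have facZ: "(\<lambda>Y. fac Y g) \<in> E \<rightarrow> carrier ZG" if "g \<in> C" for g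
    using f4 that unfolding ZG_def by auto
  have VZ: "V g \<in> Z" if "g \<in> C" for g
    using ZG.finprod_closed[OF facZ[OF that]] unfolding V_def ZG_def by simp
  have Vc: "V g \<in> carrier G" if "g \<in> C" for g using Zc[OF VZ[OF that]] .
  have Vmult: "V (g \<otimes> h) = V g \<otimes> V h" if g: "g \<in> C" and h: "h \<in> C" for g h
  proof -
    have "V (g \<otimes> h) = finprod ZG (\<lambda>Y. fac Y g \<otimes>\<^bsub>ZG\<^esub> fac (Y #> g) h) E"
      unfolding V_def using f6 g h by (intro ZG.finprod_cong') (auto simp: ZG_def intro!: Zm f4 f5')
    also have "\<dots> = finprod ZG (\<lambda>Y. fac Y g) E \<otimes>\<^bsub>ZG\<^esub> finprod ZG (\<lambda>Y. fac (Y #> g) h) E"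
      using facZ[OF g] f4 f5' g h by (intro ZG.finprod_multf) (auto simp: ZG_def intro!: f4 f5')
    also have "finprod ZG (\<lambda>Y. fac (Y #> g) h) E = finprod ZG (\<lambda>Y. fac Y h) ((\<lambda>Y. Y #> g) ` E)"
      using ZG.finprod_reindex[OF _ bij(2)[OF g], of "\<lambda>Y. fac Y h"] bij(1)[OF g] facZ[OF h] by simp
    also have "\<dots> = V h" unfolding V_def using bij(1)[OF g] by simp
    finally show ?thesis unfolding V_def ZG_def by simp
  qed
  have Vpow: "V z = z [^] card E" if z: "z \<in> Z" for z
  proof -
    have "fac Y z = z" if Y: "Y \<in> E" for Y
    proof -
      have rC: "rep Y \<in> C" and Yr: "Y = Z #> rep Y" using f2[OF Y] by auto
      have "rep Y \<otimes> z = z \<otimes> rep Y" using cen[OF z rC] by simp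
      moreover have "Z #> (z \<otimes> rep Y) = Z #> rep Y"
        using repr_independence[OF rcosI[OF z Zs Cc[OF rC]] Cc[OF rC] Z] by simp
      ultimately have "Z #> (rep Y \<otimes> z) = Y" using Yr by simp
      hence "fac Y z = rep Y \<otimes> z \<otimes> inv (rep Y)" unfolding fac_def by simp
      also have "\<dots> = z" using Cc[OF rC] Zc[OF z] by (simp add: cen[OF z rC, symmetric] m_assoc)
      finally show ?thesis .
    qed
    hence "V z = finprod ZG (\<lambda>Y. z) E" unfolding V_def using z ZC
      by (intro ZG.finprod_cong') (auto simp: ZG_def)
    also have "\<dots> = z [^]\<^bsub>ZG\<^esub> card E" using z by (intro ZG.finprod_const) (simp add: ZG_def)
    also have "\<dots> = z [^] card E" unfolding ZG_def by (simp add: nat_pow_consistent[symmetric])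
    finally show ?thesis .
  qed
  have one: "\<one> \<in> Z" "\<one> \<in> C" using subgroup.one_closed[OF Z] subgroup.one_closed[OF C] by auto
  have V1: "V \<one> = \<one>" using Vpow[OF one(1)] by simp
  have Vinv: "V (inv g) = inv (V g)" if g: "g \<in> C" for g
  proof -
    have "V (inv g) \<otimes> V g = \<one>" using Vmult[OF Ci[OF g] g] V1 Cc[OF g] by simp
    thus ?thesis using inv_equality[OF _ Vc[OF g] Vc[OF Ci[OF g]]] by simp
  qed
  define K where "K = {g \<in> C. V g = \<one>}"
  have KC: "K \<subseteq> C" unfolding K_def by blast
  have Ksub: "subgroup K G"
  proof (rule subgroupI)
    show "K \<subseteq> carrier G" using KC Cs by blast
    show "K \<noteq> {}" using one V1 unfolding K_def by blast
    show "inv g \<in> K" if "g \<in> K" for g using that Vinv Ci unfolding K_def by auto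
    show "g \<otimes> h \<in> K" if "g \<in> K" "h \<in> K" for g h using that Vmult Cm unfolding K_def by auto
  qed
  have KZ: "K \<inter> Z = {\<one>}"
  proof
    show "K \<inter> Z \<subseteq> {\<one>}"
    proof
      fix z assume "z \<in> K \<inter> Z"
      hence "z \<in> Z" "V z = \<one>" unfolding K_def by auto
      thus "z \<in> {\<one>}" using injp Vpow unfolding E_def by auto
    qed
    show "{\<one>} \<subseteq> K \<inter> Z" using one V1 unfolding K_def by auto
  qed
  have Vinj: "inj_on V Z"
  proof (rule inj_onI)
    fix z w assume z: "z \<in> Z" and w: "w \<in> Z" and e: "V z = V w"
    have zC: "z \<in> C" and wC: "w \<in> C" using z w ZC by auto
    have "V (z \<otimes> inv w) = \<one>" using Vmult[OF zC Ci[OF wC]] Vinv[OF wC] e Vc[OF wC] by simp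
    hence "z \<otimes> inv w \<in> K \<inter> Z" unfolding K_def using Cm[OF zC Ci[OF wC]] Zm[OF z Zi[OF w]] by simp
    hence "z \<otimes> inv w = \<one>" using KZ by blast
    thus "z = w" using Zc z w by (metis inv_equality inv_inv Zi)
  qed
  have VimZ: "V ` Z = Z"
    using endo_inj_surj[OF finite_subset[OF Zs fin] _ Vinj] VZ ZC by blast
  have dec: "\<exists>k\<in>K. \<exists>z\<in>Z. g = k \<otimes> z" if g: "g \<in> C" for g
  proof -
    obtain z where z: "z \<in> Z" "V z = V g" using VimZ VZ[OF g] by (metis imageE)
    have zC: "z \<in> C" using z ZC by auto
    have "V (g \<otimes> inv z) = \<one>" using Vmult[OF g Ci[OF zC]] Vinv[OF zC] z Vc[OF g] by simp
    hence "g \<otimes> inv z \<in> K" unfolding K_def using Cm[OF g Ci[OF zC]] by simp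
    moreover have "g = (g \<otimes> inv z) \<otimes> z" using Cc[OF g] Zc[OF z(1)] by (simp add: m_assoc)
    ultimately show ?thesis using z(1) by blast
  qed
  have nor: "g \<otimes> k \<otimes> inv g \<in> K" if g: "g \<in> C" and k: "k \<in> K" for g k
  proof -
    have kC: "k \<in> C" and Vk: "V k = \<one>" using k unfolding K_def by auto
    have "V (g \<otimes> k \<otimes> inv g) = V g \<otimes> V k \<otimes> V (inv g)"
      using Vmult Cm g kC Ci by metis
    also have "\<dots> = \<one>" using Vk Vinv[OF g] Vc[OF g] by simp
    finally show ?thesis unfolding K_def using Cm[OF Cm[OF g kC] Ci[OF g]] by simp
  qed
  show ?thesis using Ksub KC KZ dec nor by blast
qed



lemma (in group) subgroup_card_dvd:
  assumes fin: "finite (carrier G)" and H: "subgroup H G" and K: "subgroup K G" and HK: "H \<subseteq> K"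
  shows "card H dvd card K"
proof -
  interpret K: group "G\<lparr>carrier := K\<rparr>" using subgroup_imp_group[OF K] .
  have "subgroup H (G\<lparr>carrier := K\<rparr>)" using subgroup_incl[OF H K HK] .
  hence "card (rcosets\<^bsub>G\<lparr>carrier := K\<rparr>\<^esub> H) * card H = order (G\<lparr>carrier := K\<rparr>)"
    using K.lagrange by blast
  hence "card (rcosets\<^bsub>G\<lparr>carrier := K\<rparr>\<^esub> H) * card H = card K" by (simp add: order_def)
  thus ?thesis by (metis dvd_triv_right)
qed

lemma (in group) proper_subgroup_prime_pow:
  assumes fin: "finite (carrier G)" and H: "subgroup H G" and K: "subgroup K G" and HK: "H \<subseteq> K"
    and ne: "H \<noteq> K" and s: "Factorial_Ring.prime (s::nat)" and cK: "card K = s ^ b"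
  shows "s * card H \<le> card K"
proof -
  have "card H dvd s ^ b" using subgroup_card_dvd[OF fin H K HK] cK by simp
  then obtain i where i: "i \<le> b" "card H = s ^ i" using divides_primepow_nat[OF s] by blast
  have finK: "finite K" using fin K subgroup.subset finite_subset by blast
  have "card H < card K" using psubset_card_mono[OF finK] HK ne by blast
  hence "i < b" using i cK by (cases "i = b") auto
  hence "s ^ Suc i \<le> s ^ b" using prime_gt_1_nat[OF s] by (intro power_increasing) auto
  thus ?thesis using i cK by simp
qed

lemma (in group) inv_comm_helper:
  assumes x: "x \<in> carrier G" and y: "y \<in> carrier G" and c: "x \<otimes> y = y \<otimes> x"
  shows "inv x \<otimes> y = y \<otimes> inv x"
proof -
  have "y \<otimes> inv x = inv x \<otimes> (x \<otimes> y) \<otimes> inv x" using x y by (simp add: m_assoc[symmetric])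
  also have "\<dots> = inv x \<otimes> (y \<otimes> x) \<otimes> inv x" using c by simp
  also have "\<dots> = inv x \<otimes> y" using x y by (simp add: m_assoc)
  finally show ?thesis by simp
qed

lemma (in group) comm_prob_bound:
  assumes fin: "finite (carrier G)" and R: "subgroup R G" and S: "subgroup S G"
    and p: "Factorial_Ring.prime (p::nat)" and cR: "card R = p ^ a"
    and s: "Factorial_Ring.prime (s::nat)" and cS: "card S = s ^ b"
    and q: "0 < q" "q \<le> s"
    and gt: "comm_prob G R S > real (p + q - 1) / real (p * q)"
  shows "\<forall>x\<in>R. \<forall>y\<in>S. x \<otimes> y = y \<otimes> x"
proof (rule ccontr)
  assume nc: "\<not> ?thesis"
  have Rs: "R \<subseteq> carrier G" using R subgroup.subset by blast
  have Ss: "S \<subseteq> carrier G" using S subgroup.subset by blast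
  have finR: "finite R" using fin Rs finite_subset by blast
  have finS: "finite S" using fin Ss finite_subset by blast
  define A where "A = {x \<in> R. \<forall>y\<in>S. x \<otimes> y = y \<otimes> x}"
  define Cs where "Cs x = {y \<in> S. x \<otimes> y = y \<otimes> x}" for x
  have Asub: "subgroup A G"
  proof (rule subgroupI)
    show "A \<subseteq> carrier G" using Rs unfolding A_def by blast
    show "A \<noteq> {}" using subgroup.one_closed[OF R] Ss unfolding A_def by (auto intro!: exI[of _ \<one>] simp: subsetD)
    show "inv x \<in> A" if x: "x \<in> A" for x
    proof -
      have xR: "x \<in> R" and xc: "\<And>y. y \<in> S \<Longrightarrow> x \<otimes> y = y \<otimes> x" using x unfolding A_def by auto
      have "inv x \<otimes> y = y \<otimes> inv x" if y: "y \<in> S" for y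
        using inv_comm_helper[OF _ _ xc[OF y]] Rs Ss xR y by blast
      thus ?thesis using subgroup.m_inv_closed[OF R xR] unfolding A_def by auto
    qed
    show "x \<otimes> z \<in> A" if x: "x \<in> A" and z: "z \<in> A" for x z
    proof -
      have xR: "x \<in> R" and xc: "\<And>y. y \<in> S \<Longrightarrow> x \<otimes> y = y \<otimes> x" using x unfolding A_def by auto
      have zR: "z \<in> R" and zc: "\<And>y. y \<in> S \<Longrightarrow> z \<otimes> y = y \<otimes> z" using z unfolding A_def by auto
      have "x \<otimes> z \<otimes> y = y \<otimes> (x \<otimes> z)" if y: "y \<in> S" for y
      proof -
        have c: "x \<in> carrier G" "z \<in> carrier G" "y \<in> carrier G" using xR zR y Rs Ss by auto
        have "x \<otimes> z \<otimes> y = x \<otimes> (y \<otimes> z)" using zc[OF y] c by (simp add: m_assoc)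
        also have "\<dots> = y \<otimes> x \<otimes> z" using xc[OF y] c by (simp add: m_assoc[symmetric])
        finally show ?thesis using c by (simp add: m_assoc)
      qed
      thus ?thesis using subgroup.m_closed[OF R xR zR] unfolding A_def by auto
    qed
  qed
  have CsSub: "subgroup (Cs x) G" if x: "x \<in> R" for x
  proof (rule subgroupI)
    have xc: "x \<in> carrier G" using x Rs by blast
    show "Cs x \<subseteq> carrier G" using Ss unfolding Cs_def by blast
    show "Cs x \<noteq> {}" using subgroup.one_closed[OF S] xc unfolding Cs_def by auto
    show "inv y \<in> Cs x" if y: "y \<in> Cs x" for y
    proof -
      have yS: "y \<in> S" and yc: "x \<otimes> y = y \<otimes> x" using y unfolding Cs_def by auto
      have "x \<otimes> inv y = inv y \<otimes> x" using inv_comm_helper[OF _ xc yc[symmetric]] yS Ss by (metis subsetD)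
      thus ?thesis using subgroup.m_inv_closed[OF S yS] unfolding Cs_def by auto
    qed
    show "y \<otimes> z \<in> Cs x" if y: "y \<in> Cs x" and z: "z \<in> Cs x" for y z
    proof -
      have yS: "y \<in> S" and yc: "x \<otimes> y = y \<otimes> x" using y unfolding Cs_def by auto
      have zS: "z \<in> S" and zc: "x \<otimes> z = z \<otimes> x" using z unfolding Cs_def by auto
      have c: "y \<in> carrier G" "z \<in> carrier G" using yS zS Ss by auto
      have "x \<otimes> (y \<otimes> z) = y \<otimes> (x \<otimes> z)" using yc c xc by (simp add: m_assoc[symmetric])
      also have "\<dots> = y \<otimes> z \<otimes> x" using zc c xc by (simp add: m_assoc)
      finally show ?thesis using subgroup.m_closed[OF S yS zS] unfolding Cs_def by auto
    qed
  qed
  have AR: "A \<subseteq> R" unfolding A_def by blast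
  have AneR: "A \<noteq> R" using nc unfolding A_def by blast
  have pA: "p * card A \<le> card R" using proper_subgroup_prime_pow[OF fin Asub R AR AneR p cR] .
  have cA: "x \<in> A \<Longrightarrow> Cs x = S" for x unfolding A_def Cs_def by auto
  have cnA: "q * card (Cs x) \<le> card S" if x: "x \<in> R - A" for x
  proof -
    have "Cs x \<noteq> S" using x unfolding A_def Cs_def by auto
    hence "s * card (Cs x) \<le> card S"
      using proper_subgroup_prime_pow[OF fin CsSub[of x] S _ _ s cS] x unfolding Cs_def by auto
    moreover have "q * card (Cs x) \<le> s * card (Cs x)" using q by simp
    ultimately show ?thesis by linarith
  qed
  define N where "N = card {(x, y) \<in> Sigma R (\<lambda>_. S). x \<otimes> y = y \<otimes> x}"
  have "{(x, y) \<in> Sigma R (\<lambda>_. S). x \<otimes> y = y \<otimes> x} = Sigma R Cs"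
    unfolding Cs_def by auto
  hence "N = card (Sigma R Cs)" unfolding N_def by simp
  also have "\<dots> = (\<Sum>x\<in>R. card (Cs x))"
    using finR finS by (intro card_SigmaI) (auto simp: Cs_def)
  also have "\<dots> = (\<Sum>x\<in>A. card (Cs x)) + (\<Sum>x\<in>R - A. card (Cs x))"
    using finR AR by (metis sum.subset_diff add.commute)
  also have "(\<Sum>x\<in>A. card (Cs x)) = card A * card S" using cA by simp
  finally have N: "N = card A * card S + (\<Sum>x\<in>R - A. card (Cs x))" .
  have "q * (\<Sum>x\<in>R - A. card (Cs x)) \<le> (\<Sum>x\<in>R - A. card S)"
    unfolding sum_distrib_left using cnA by (intro sum_mono) auto
  also have "\<dots> = (card R - card A) * card S" using finR AR by (simp add: card_Diff_subset finite_subset)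
  finally have qN: "q * N \<le> q * card A * card S + (card R - card A) * card S" using N
    by (simp add: algebra_simps)
  have cAR: "card A \<le> card R" using finR AR card_mono by blast
  have "p * q * N \<le> p * q * card A * card S + p * (card R - card A) * card S"
    using mult_le_mono2[OF qN, of p] by (simp add: algebra_simps)
  also have "\<dots> = p * card A * (q - 1) * card S + p * card R * card S"
    using cAR q by (simp add: algebra_simps diff_mult_distrib2 diff_mult_distrib)
  also have "\<dots> \<le> card R * (q - 1) * card S + p * card R * card S"
    using pA by (intro add_mono mult_le_mono) auto
  also have "\<dots> = (p + q - 1) * (card R * card S)"
    using q by (simp add: algebra_simps diff_mult_distrib2 diff_mult_distrib)
  finally have ineq: "p * q * N \<le> (p + q - 1) * (card R * card S)" .
  have pos: "0 < card R" "0 < card S" "0 < p * q"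
    using finR finS subgroup.one_closed[OF R] subgroup.one_closed[OF S] card_gt_0_iff prime_gt_0_nat[OF p] q
    by auto
  have "real (p * q) * real N \<le> real (p + q - 1) * (real (card R) * real (card S))"
    using ineq by (metis of_nat_le_iff of_nat_mult)
  hence "real N / (real (card R) * real (card S)) \<le> real (p + q - 1) / real (p * q)"
    using pos by (simp add: divide_simps mult.commute)
  moreover have "comm_prob G R S = real N / (real (card R) * real (card S))"
    unfolding comm_prob_def N_def by simp
  ultimately show False using gt by simp
qed



lemma sylow_exists:
  assumes G: "group G" and fin: "finite (carrier G)" and r: "Factorial_Ring.prime (r::nat)"
  shows "\<exists>P. sylow_subgroup G r P"
proof -
  define a where "a = multiplicity r (order G)"
  define m where "m = order G div r ^ a"
  have "order G = r ^ a * m" unfolding m_def a_def by (simp add: multiplicity_dvd)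
  hence "sylow G r a m" using G fin r by (simp add: sylow_eq sylow_axioms_def)
  then obtain H where "subgroup H G" "card H = r ^ a" using sylow.sylow_thm by blast
  thus ?thesis unfolding sylow_subgroup_def a_def by blast
qed

lemma pr_star_extract:
  assumes G: "group G" and fin: "finite (carrier G)" and p: "Factorial_Ring.prime (p::nat)"
    and s: "Factorial_Ring.prime s" and sp: "s \<noteq> p"
    and gt: "pr_star G {p} (primes_except p) > c"
  shows "\<exists>R S. sylow_subgroup G p R \<and> sylow_subgroup G s S \<and> comm_prob G R S > c"
proof -
  define T where "T = {t. Factorial_Ring.prime t \<and> t \<noteq> p}"
  define Pairs where "Pairs t = {(R, S). sylow_subgroup G p R \<and> sylow_subgroup G t S}" for t
  define F where "F = (\<lambda>(R, S). comm_prob G R S)"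
  define f where "f t = Max (F ` Pairs t)" for t
  define M where "M = Min (f ` T)"
  have sub: "Hs \<subseteq> carrier G" if "subgroup Hs G" for Hs using that subgroup.subset by blast
  have PairsPow: "Pairs t \<subseteq> Pow (carrier G) \<times> Pow (carrier G)" for t
    unfolding Pairs_def sylow_subgroup_def using sub by auto
  have finP: "finite (Pairs t)" for t using finite_subset[OF PairsPow] fin by blast
  have neP: "Pairs t \<noteq> {}" if tT: "t \<in> T" for t
  proof -
    obtain R where "sylow_subgroup G p R" using sylow_exists[OF G fin p] by blast
    moreover obtain S where "sylow_subgroup G t S" using sylow_exists[OF G fin] tT unfolding T_def by blast
    ultimately show ?thesis unfolding Pairs_def by blast
  qed
  have fT: "f ` T \<subseteq> F ` (Pow (carrier G) \<times> Pow (carrier G))"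
  proof
    fix v assume "v \<in> f ` T"
    then obtain t where t: "t \<in> T" "v = f t" by blast
    have "f t \<in> F ` Pairs t" unfolding f_def using finP neP[OF t(1)] by (intro Max_in) auto
    thus "v \<in> F ` (Pow (carrier G) \<times> Pow (carrier G))" using t PairsPow by blast
  qed
  have finfT: "finite (f ` T)" using finite_subset[OF fT] fin by blast
  have nefT: "f ` T \<noteq> {}" using s sp unfolding T_def by blast
  define Q where "Q \<epsilon> = (\<forall>r s. r \<in> {p} \<and> s \<in> primes_except p \<and> Factorial_Ring.prime r \<and> Factorial_Ring.prime s \<and> r \<noteq> s \<longrightarrow>
       (\<exists>R S. sylow_subgroup G r R \<and> sylow_subgroup G s S \<and> comm_prob G R S \<ge> \<epsilon>))" for \<epsilon>
  have QM: "Q M"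
    unfolding Q_def
  proof (intro allI impI)
    fix r t assume h: "r \<in> {p} \<and> t \<in> primes_except p \<and> Factorial_Ring.prime r \<and> Factorial_Ring.prime t \<and> r \<noteq> t"
    hence t: "t \<in> T" and rp: "r = p" unfolding T_def primes_except_def by auto
    have "f t \<in> F ` Pairs t" unfolding f_def using finP neP[OF t] by (intro Max_in) auto
    then obtain R S where RS: "(R, S) \<in> Pairs t" "F (R, S) = f t" by auto
    have "M \<le> f t" unfolding M_def using finfT t by (intro Min_le) auto
    thus "\<exists>R S. sylow_subgroup G r R \<and> sylow_subgroup G t S \<and> M \<le> comm_prob G R S"
    proof -
      have "sylow_subgroup G r R \<and> sylow_subgroup G t S \<and> M \<le> comm_prob G R S"
        using RS rp \<open>M \<le> f t\<close> unfolding Pairs_def F_def by auto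
      thus ?thesis by blast
    qed
  qed
  have Qle: "\<epsilon> \<le> M" if Qe: "Q \<epsilon>" for \<epsilon>
  proof -
    have "M \<in> f ` T" unfolding M_def using finfT nefT by (rule Min_in)
    then obtain t where t: "t \<in> T" "M = f t" by blast
    have "p \<in> {p} \<and> t \<in> primes_except p \<and> Factorial_Ring.prime p \<and> Factorial_Ring.prime t \<and> p \<noteq> t"
      using t p unfolding T_def primes_except_def by auto
    then obtain R S where RS: "sylow_subgroup G p R" "sylow_subgroup G t S" "comm_prob G R S \<ge> \<epsilon>"
      using Qe unfolding Q_def by blast
    have "F (R, S) \<le> f t" unfolding f_def using finP RS(1,2) unfolding Pairs_def
      by (intro Max_ge) auto
    thus ?thesis using RS(3) t(2) unfolding F_def by simp
  qed
  have "pr_star G {p} (primes_except p) = M"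
    unfolding pr_star_def using QM Qle unfolding Q_def by (intro Greatest_equality) auto
  hence "M > c" using gt by simp
  have "p \<in> {p} \<and> s \<in> primes_except p \<and> Factorial_Ring.prime p \<and> Factorial_Ring.prime s \<and> p \<noteq> s"
    using s sp p unfolding primes_except_def by auto
  then obtain R S where "sylow_subgroup G p R" "sylow_subgroup G s S" "comm_prob G R S \<ge> M"
    using QM unfolding Q_def by blast
  thus ?thesis using \<open>M > c\<close> by force
qed



lemma (in group) centralizer_subgroup:
  assumes Xs: "Xs \<subseteq> carrier G"
  shows "subgroup {x \<in> carrier G. \<forall>r\<in>Xs. x \<otimes> r = r \<otimes> x} G"
proof (rule subgroupI)
  let ?C = "{x \<in> carrier G. \<forall>r\<in>Xs. x \<otimes> r = r \<otimes> x}"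
  show "?C \<subseteq> carrier G" by blast
  show "?C \<noteq> {}" using Xs by (auto intro!: exI[of _ \<one>] simp: subsetD)
  show "inv x \<in> ?C" if x: "x \<in> ?C" for x
  proof -
    have "inv x \<otimes> r = r \<otimes> inv x" if r: "r \<in> Xs" for r
      using inv_comm_helper[of x r] x r Xs by auto
    thus ?thesis using x by auto
  qed
  show "x \<otimes> z \<in> ?C" if x: "x \<in> ?C" and z: "z \<in> ?C" for x z
  proof -
    have "x \<otimes> z \<otimes> r = r \<otimes> (x \<otimes> z)" if r: "r \<in> Xs" for r
    proof -
      have c: "x \<in> carrier G" "z \<in> carrier G" "r \<in> carrier G" using x z r Xs by auto
      have "x \<otimes> z \<otimes> r = x \<otimes> (r \<otimes> z)" using z r c by (simp add: m_assoc)
      also have "\<dots> = r \<otimes> x \<otimes> z" using x r c by (simp add: m_assoc[symmetric])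
      finally show ?thesis using c by (simp add: m_assoc)
    qed
    thus ?thesis using x z by auto
  qed
qed

lemma (in group) conj_subgroup:
  assumes H: "subgroup H G" and g: "g \<in> carrier G"
  shows "subgroup ((\<lambda>y. inv g \<otimes> y \<otimes> g) ` H) G" "card ((\<lambda>y. inv g \<otimes> y \<otimes> g) ` H) = card H"
proof -
  have Hs: "H \<subseteq> carrier G" using H subgroup.subset by blast
  show "subgroup ((\<lambda>y. inv g \<otimes> y \<otimes> g) ` H) G"
  proof (rule subgroupI)
    show "(\<lambda>y. inv g \<otimes> y \<otimes> g) ` H \<subseteq> carrier G" using Hs g by auto
    show "(\<lambda>y. inv g \<otimes> y \<otimes> g) ` H \<noteq> {}" using subgroup.one_closed[OF H] by blast
    show "inv x \<in> (\<lambda>y. inv g \<otimes> y \<otimes> g) ` H" if x: "x \<in> (\<lambda>y. inv g \<otimes> y \<otimes> g) ` H" for x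
    proof -
      obtain y where y: "y \<in> H" "x = inv g \<otimes> y \<otimes> g" using x by blast
      have yc: "y \<in> carrier G" using y Hs by blast
      have "inv x = inv g \<otimes> inv y \<otimes> g" using y(2) yc g by (simp add: inv_mult_group m_assoc)
      thus ?thesis using subgroup.m_inv_closed[OF H y(1)] by blast
    qed
    show "x \<otimes> z \<in> (\<lambda>y. inv g \<otimes> y \<otimes> g) ` H"
      if x: "x \<in> (\<lambda>y. inv g \<otimes> y \<otimes> g) ` H" and z: "z \<in> (\<lambda>y. inv g \<otimes> y \<otimes> g) ` H" for x z
    proof -
      obtain y where y: "y \<in> H" "x = inv g \<otimes> y \<otimes> g" using x by blast
      obtain w where w: "w \<in> H" "z = inv g \<otimes> w \<otimes> g" using z by blast
      have c: "y \<in> carrier G" "w \<in> carrier G" using y w Hs by auto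
      have "x \<otimes> z = inv g \<otimes> (y \<otimes> w) \<otimes> g" using y(2) w(2) c g
        by (simp add: m_assoc r_inv[symmetric]) (simp add: m_assoc[symmetric])
      thus ?thesis using subgroup.m_closed[OF H y(1) w(1)] by blast
    qed
  qed
  have "inj_on (\<lambda>y. inv g \<otimes> y \<otimes> g) H"
  proof (rule inj_onI)
    fix y w assume "y \<in> H" "w \<in> H" "inv g \<otimes> y \<otimes> g = inv g \<otimes> w \<otimes> g"
    moreover have "y \<in> carrier G" "w \<in> carrier G" using \<open>y \<in> H\<close> \<open>w \<in> H\<close> Hs by auto
    ultimately show "y = w" using g by simp
  qed
  thus "card ((\<lambda>y. inv g \<otimes> y \<otimes> g) ` H) = card H" by (rule card_image)
qed

lemma (in group) conj_commute:
  assumes g: "g \<in> carrier G" and r: "r \<in> carrier G" and y: "y \<in> carrier G"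
    and c: "y \<otimes> (g \<otimes> r \<otimes> inv g) = (g \<otimes> r \<otimes> inv g) \<otimes> y"
  shows "(inv g \<otimes> y \<otimes> g) \<otimes> r = r \<otimes> (inv g \<otimes> y \<otimes> g)"
proof -
  have "(inv g \<otimes> y \<otimes> g) \<otimes> r = inv g \<otimes> (y \<otimes> (g \<otimes> r \<otimes> inv g)) \<otimes> g"
    using g r y by (simp add: m_assoc)
  also have "\<dots> = inv g \<otimes> ((g \<otimes> r \<otimes> inv g) \<otimes> y) \<otimes> g" using c by simp
  also have "\<dots> = r \<otimes> (inv g \<otimes> y \<otimes> g)"
    using g r y by (simp add: m_assoc) (simp add: m_assoc[symmetric])
  finally show ?thesis .
qed

lemma (in group) set_mult_subgroup_comm:
  assumes R: "subgroup R G" and C: "subgroup C G"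
    and cm: "\<And>c r. c \<in> C \<Longrightarrow> r \<in> R \<Longrightarrow> c \<otimes> r = r \<otimes> c"
  shows "subgroup (R <#> C) G"
proof (rule subgroupI)
  have Rs: "R \<subseteq> carrier G" using R subgroup.subset by blast
  have Cs: "C \<subseteq> carrier G" using C subgroup.subset by blast
  show "R <#> C \<subseteq> carrier G" using Rs Cs unfolding set_mult_def by auto
  show "R <#> C \<noteq> {}" using subgroup.one_closed[OF R] subgroup.one_closed[OF C] unfolding set_mult_def by blast
  show "inv x \<in> R <#> C" if x: "x \<in> R <#> C" for x
  proof -
    obtain r c where rc: "r \<in> R" "c \<in> C" "x = r \<otimes> c" using x unfolding set_mult_def by blast
    have cc: "r \<in> carrier G" "c \<in> carrier G" using rc Rs Cs by auto
    have "inv x = inv c \<otimes> inv r" using rc cc by (simp add: inv_mult_group)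
    also have "\<dots> = inv r \<otimes> inv c"
      using cm[OF subgroup.m_inv_closed[OF C rc(2)] subgroup.m_inv_closed[OF R rc(1)]] .
    finally show ?thesis using subgroup.m_inv_closed[OF C rc(2)] subgroup.m_inv_closed[OF R rc(1)]
      unfolding set_mult_def by blast
  qed
  show "x \<otimes> z \<in> R <#> C" if x: "x \<in> R <#> C" and z: "z \<in> R <#> C" for x z
  proof -
    obtain r c where rc: "r \<in> R" "c \<in> C" "x = r \<otimes> c" using x unfolding set_mult_def by blast
    obtain r' c' where rc': "r' \<in> R" "c' \<in> C" "z = r' \<otimes> c'" using z unfolding set_mult_def by blast
    have cc: "r \<in> carrier G" "c \<in> carrier G" "r' \<in> carrier G" "c' \<in> carrier G" using rc rc' Rs Cs by auto
    have "x \<otimes> z = r \<otimes> (c \<otimes> r') \<otimes> c'" using rc rc' cc by (simp add: m_assoc)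
    also have "\<dots> = (r \<otimes> r') \<otimes> (c \<otimes> c')" using cm[OF rc(2) rc'(1)] cc by (simp add: m_assoc)
    finally show ?thesis using subgroup.m_closed[OF R rc(1) rc'(1)] subgroup.m_closed[OF C rc(2) rc'(2)]
      unfolding set_mult_def by blast
  qed
qed

lemma coprime_by_primes:
  assumes "\<And>t. Factorial_Ring.prime (t::nat) \<Longrightarrow> t dvd a \<Longrightarrow> t dvd b \<Longrightarrow> False"
  shows "coprime a b"
proof (rule ccontr)
  assume "\<not> coprime a b"
  hence "gcd a b \<noteq> 1" by (simp add: coprime_iff_gcd_eq_1)
  then obtain t where "Factorial_Ring.prime t" "t dvd gcd a b" using prime_factor_nat by blast
  thus False using assms by auto
qed

lemma dvd_from_multiplicities:
  fixes n c :: nat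
  assumes n: "n \<noteq> 0" and c: "c \<noteq> 0"
    and h: "\<And>t. Factorial_Ring.prime t \<Longrightarrow> t dvd n \<Longrightarrow> t ^ multiplicity t n dvd c"
  shows "n dvd c"
proof (rule multiplicity_le_imp_dvd[OF n])
  fix t :: nat assume t: "Factorial_Ring.prime t"
  show "multiplicity t n \<le> multiplicity t c"
  proof (cases "t dvd n")
    case True
    thus ?thesis using h[OF t True] c t by (intro multiplicity_geI) (auto simp: prime_gt_1_nat)
  next
    case False
    thus ?thesis by (simp add: not_dvd_imp_multiplicity_0)
  qed
qed

lemma O_pi_eq:
  assumes G: "group G" and X: "Xn \<lhd> G" and pX: "pi_subgroup G \<pi> Xn"
    and mx: "\<And>N. N \<lhd> G \<Longrightarrow> pi_subgroup G \<pi> N \<Longrightarrow> N \<subseteq> Xn"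
  shows "O_pi G \<pi> = Xn"
proof -
  interpret group G using G .
  have "\<Union>{N. N \<lhd> G \<and> pi_subgroup G \<pi> N} = Xn" using X pX mx by blast
  moreover have "generate G Xn = Xn"
  proof
    show "generate G Xn \<subseteq> Xn" using generate_subgroup_incl[OF _ normal_imp_subgroup[OF X]] by blast
    show "Xn \<subseteq> generate G Xn"
    proof
      fix x assume "x \<in> Xn" thus "x \<in> generate G Xn" by (rule generate.incl)
    qed
  qed
  ultimately show ?thesis unfolding O_pi_def by simp
qed



lemma prime_dvd_prime_pow:
  assumes "Factorial_Ring.prime (t::nat)" "Factorial_Ring.prime p" "t dvd p ^ k"
  shows "t = p"
  using assms prime_dvd_power primes_dvd_imp_eq by blast

lemma (in group) conj_prod:
  assumes "r \<in> carrier G" "c \<in> carrier G" "h \<in> carrier G"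
  shows "(r \<otimes> c) \<otimes> h \<otimes> inv (r \<otimes> c) = r \<otimes> (c \<otimes> h \<otimes> inv c) \<otimes> inv r"
  using assms by (simp add: inv_mult_group m_assoc)

lemma (in group) main_aux:
  fixes p q :: nat
  assumes "finite (carrier G)"
    and "Factorial_Ring.prime p" and "p dvd order G"
    and "q \<in> prime_divs G - {p}"
    and "\<forall>r \<in> prime_divs G - {p}. q \<le> r"
    and "pr_star G {p} (primes_except p) > real (p + q - 1) / real (p * q)"
  shows "O_pi G {p} \<lhd> G \<and> O_pi G (primes_except p) \<lhd> G
     \<and> O_pi G {p} \<inter> O_pi G (primes_except p) = {monoid.one G}
     \<and> set_mult G (O_pi G {p}) (O_pi G (primes_except p)) = carrier G"
proof -
  note Ggrp = is_group
  note fin = assms(1) and p = assms(2) and qd = assms(4) and qmin = assms(5) and prs = assms(6)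
  define n where "n = order G"
  define a where "a = multiplicity p n"
  define m where "m = n div p ^ a"
  have n0: "n \<noteq> 0" unfolding n_def using order_gt_0_iff_finite fin by simp
  have nm: "n = p ^ a * m" unfolding m_def a_def by (simp add: multiplicity_dvd)
  have pm: "\<not> p dvd m" unfolding m_def a_def using multiplicity_decompose[OF n0, of p] prime_gt_1_nat[OF p] by auto
  have m0: "m \<noteq> 0" using nm n0 by auto
  have q: "Factorial_Ring.prime q" "q \<noteq> p" using qd unfolding prime_divs_def by auto
  have q0: "0 < q" using prime_gt_0_nat[OF q(1)] .
  have sub: "Hs \<subseteq> carrier G" if "subgroup Hs G" for Hs using that subgroup.subset by blast
  have sylcard: "card Hs * card (rcosets Hs) = n" if "subgroup Hs G" for Hs
    using lagrange[OF that] unfolding n_def by (simp add: mult.commute)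
  have pairs: "\<exists>Rs Ss. sylow_subgroup G p Rs \<and> sylow_subgroup G s Ss \<and> (\<forall>x\<in>Rs. \<forall>y\<in>Ss. x \<otimes> y = y \<otimes> x)"
    if s: "s \<in> prime_divs G - {p}" for s
  proof -
    have sp: "Factorial_Ring.prime s" "s \<noteq> p" using s unfolding prime_divs_def by auto
    obtain Rs Ss where RS: "sylow_subgroup G p Rs" "sylow_subgroup G s Ss"
      "comm_prob G Rs Ss > real (p + q - 1) / real (p * q)"
      using pr_star_extract[OF Ggrp fin p sp prs] by blast
    have "\<forall>x\<in>Rs. \<forall>y\<in>Ss. x \<otimes> y = y \<otimes> x"
      using comm_prob_bound[OF fin _ _ p _ sp(1) _ q0 _ RS(3)] RS(1,2) qmin s
      unfolding sylow_subgroup_def n_def by auto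
    thus ?thesis using RS by blast
  qed
  obtain R where Rsyl: "sylow_subgroup G p R" using sylow_exists[OF Ggrp fin p] by blast
  have Rsub: "subgroup R G" and cR: "card R = p ^ a"
    using Rsyl unfolding sylow_subgroup_def a_def n_def by auto
  have Rs: "R \<subseteq> carrier G" using sub[OF Rsub] .
  define C where "C = {x \<in> carrier G. \<forall>r\<in>R. x \<otimes> r = r \<otimes> x}"
  have Csub: "subgroup C G" unfolding C_def using centralizer_subgroup[OF Rs] .
  have Cs: "C \<subseteq> carrier G" using sub[OF Csub] .
  have rcR: "card (rcosets Hs) = m" if "subgroup Hs G" "card Hs = p ^ a" for Hs
  proof -
    have "p ^ a * card (rcosets Hs) = p ^ a * m" using sylcard[OF that(1)] that(2) nm by simp
    thus ?thesis using prime_gt_0_nat[OF p] by simp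
  qed
  have Sdvd: "s ^ multiplicity s n dvd card C" if s: "s \<in> prime_divs G - {p}" for s
  proof -
    obtain Rs Ss where RS: "sylow_subgroup G p Rs" "sylow_subgroup G s Ss"
      and cm: "\<forall>x\<in>Rs. \<forall>y\<in>Ss. x \<otimes> y = y \<otimes> x" using pairs[OF s] by blast
    have Rssub: "subgroup Rs G" and cRs: "card Rs = p ^ a"
      using RS(1) unfolding sylow_subgroup_def a_def n_def by auto
    have Sssub: "subgroup Ss G" and cSs: "card Ss = s ^ multiplicity s n"
      using RS(2) unfolding sylow_subgroup_def n_def by auto
    have nd: "\<not> p dvd card (rcosets Rs)" using rcR[OF Rssub cRs] pm by simp
    obtain g where g: "g \<in> carrier G" and gc: "\<forall>h\<in>R. g \<otimes> h \<otimes> inv g \<in> Rs"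
      using sylow_conj[OF fin p Rssub Rsub cR nd] by blast
    define S' where "S' = (\<lambda>y. inv g \<otimes> y \<otimes> g) ` Ss"
    have S'sub: "subgroup S' G" and cS': "card S' = card Ss"
      unfolding S'_def using conj_subgroup[OF Sssub g] by auto
    have "S' \<subseteq> C"
    proof
      fix x assume "x \<in> S'"
      then obtain y where y: "y \<in> Ss" "x = inv g \<otimes> y \<otimes> g" unfolding S'_def by blast
      have yc: "y \<in> carrier G" using y(1) sub[OF Sssub] by blast
      have "x \<otimes> r = r \<otimes> x" if r: "r \<in> R" for r
      proof -
        have rc: "r \<in> carrier G" using r Rs by blast
        have "(g \<otimes> r \<otimes> inv g) \<otimes> y = y \<otimes> (g \<otimes> r \<otimes> inv g)" using cm gc r y(1) by blast
        thus ?thesis using conj_commute[OF g rc yc] y(2) by simp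
      qed
      moreover have "x \<in> carrier G" using y(2) yc g by simp
      ultimately show "x \<in> C" unfolding C_def by blast
    qed
    hence "card S' dvd card C" using subgroup_card_dvd[OF fin S'sub Csub] by simp
    thus ?thesis using cS' cSs by simp
  qed
  have cmCR: "c \<otimes> r = r \<otimes> c" if "c \<in> C" "r \<in> R" for c r using that unfolding C_def by blast
  define H where "H = R <#> C"
  have Hsub: "subgroup H G" unfolding H_def using set_mult_subgroup_comm[OF Rsub Csub cmCR] .
  have RH: "R \<subseteq> H"
  proof
    fix r assume r: "r \<in> R"
    have "r = r \<otimes> \<one>" using r Rs by auto
    thus "r \<in> H" unfolding H_def set_mult_def using r subgroup.one_closed[OF Csub] by blast
  qed
  have CH: "C \<subseteq> H"
  proof
    fix c assume c: "c \<in> C"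
    have "c = \<one> \<otimes> c" using c Cs by auto
    thus "c \<in> H" unfolding H_def set_mult_def using c subgroup.one_closed[OF Rsub] by blast
  qed
  have finH: "finite H" using sub[OF Hsub] fin finite_subset by blast
  have H0: "card H \<noteq> 0" using finH subgroup.one_closed[OF Hsub] by auto
  have "n dvd card H"
  proof (rule dvd_from_multiplicities[OF n0 H0])
    fix t assume t: "Factorial_Ring.prime t" "t dvd n"
    show "t ^ multiplicity t n dvd card H"
    proof (cases "t = p")
      case True
      thus ?thesis using subgroup_card_dvd[OF fin Rsub Hsub RH] cR unfolding a_def by simp
    next
      case False
      hence "t \<in> prime_divs G - {p}" using t unfolding prime_divs_def n_def by auto
      thus ?thesis using Sdvd subgroup_card_dvd[OF fin Csub Hsub CH] dvd_trans by blast
    qed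
  qed
  hence "card (carrier G) \<le> card H" using H0 unfolding n_def order_def by (simp add: dvd_imp_le)
  hence HG: "H = carrier G" using card_seteq[OF fin sub[OF Hsub]] by blast
  have dec: "\<exists>r\<in>R. \<exists>c\<in>C. x = r \<otimes> c" if "x \<in> carrier G" for x
    using that HG unfolding H_def set_mult_def by blast
  have Rnorm: "R \<lhd> G"
    unfolding normal_inv_iff
  proof (intro conjI ballI)
    show "subgroup R G" by (rule Rsub)
    fix x h assume x: "x \<in> carrier G" and h: "h \<in> R"
    obtain r c where rc: "r \<in> R" "c \<in> C" "x = r \<otimes> c" using dec[OF x] by blast
    have cc: "r \<in> carrier G" "c \<in> carrier G" "h \<in> carrier G" using rc h Rs Cs by auto
    have "c \<otimes> h \<otimes> inv c = h" using cmCR[OF rc(2) h] cc by (simp add: m_assoc)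
    hence "x \<otimes> h \<otimes> inv x = r \<otimes> h \<otimes> inv r" using conj_prod[OF cc] rc(3) by simp
    thus "x \<otimes> h \<otimes> inv x \<in> R"
      using subgroup.m_closed[OF Rsub subgroup.m_closed[OF Rsub rc(1) h] subgroup.m_inv_closed[OF Rsub rc(1)]] by simp
  qed
  have pelem: "x \<in> R" if x: "x \<in> carrier G" and pt: "\<And>t. Factorial_Ring.prime t \<Longrightarrow> t dvd ord x \<Longrightarrow> t = p" for x
  proof (rule in_normal_if_coprime[OF fin Rnorm x])
    show "coprime (ord x) (card (rcosets R))" unfolding rcR[OF Rsub cR]
      using pt pm by (intro coprime_by_primes) blast
  qed
  define Z where "Z = R \<inter> C"
  have Zsub: "subgroup Z G" unfolding Z_def using subgroups_Inter_pair[OF Rsub Csub] .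
  have ZC: "Z \<subseteq> C" and ZR: "Z \<subseteq> R" unfolding Z_def by auto
  have cen: "z \<otimes> g = g \<otimes> z" if "z \<in> Z" "g \<in> C" for z g
    using cmCR[of g z] that unfolding Z_def by auto
  define E where "E = (\<lambda>g. Z #> g) ` C"
  interpret Cg: group "G\<lparr>carrier := C\<rparr>" using subgroup_imp_group[OF Csub] .
  have finC: "finite C" using Cs fin finite_subset by blast
  have lagC: "card E * card Z = card C"
  proof -
    have "card (rcosets\<^bsub>G\<lparr>carrier := C\<rparr>\<^esub> Z) * card Z = order (G\<lparr>carrier := C\<rparr>)"
      using Cg.lagrange[OF subgroup_incl[OF Zsub Csub ZC]] .
    moreover have "rcosets\<^bsub>G\<lparr>carrier := C\<rparr>\<^esub> Z = E"
      unfolding RCOSETS_def r_coset_def E_def by auto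
    ultimately show ?thesis by (simp add: order_def)
  qed
  obtain e where cZ: "card Z = p ^ e"
  proof -
    have "card Z dvd p ^ a" using subgroup_card_dvd[OF fin Zsub Rsub ZR] cR by simp
    thus ?thesis using divides_primepow_nat[OF p] that by blast
  qed
  have pE: "\<not> p dvd card E"
  proof
    assume pd: "p dvd card E"
    obtain PC where PC: "sylow_subgroup (G\<lparr>carrier := C\<rparr>) p PC"
      using sylow_exists[OF Cg.is_group _ p] finC by auto
    have PCsub': "subgroup PC (G\<lparr>carrier := C\<rparr>)" and cPC: "card PC = p ^ multiplicity p (card C)"
      using PC unfolding sylow_subgroup_def by (auto simp: order_def)
    have PCsub: "subgroup PC G" using incl_subgroup[OF Csub PCsub'] .
    have PCC: "PC \<subseteq> C" using subgroup.subset[OF PCsub'] by simp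
    have "PC \<subseteq> R"
    proof
      fix x assume x: "x \<in> PC"
      have xc: "x \<in> carrier G" using x sub[OF PCsub] by blast
      have "ord x dvd card PC" using ord_dvd_subgroup_card[OF fin PCsub x] .
      hence "t = p" if "Factorial_Ring.prime t" "t dvd ord x" for t
        using that cPC prime_dvd_prime_pow[OF that(1) p] dvd_trans by metis
      thus "x \<in> R" using pelem[OF xc] by blast
    qed
    hence "PC \<subseteq> Z" using PCC unfolding Z_def by blast
    hence le1: "card PC \<le> card Z" using card_mono finC ZC finite_subset by metis
    obtain k where "card E = p * k" using pd by blast
    hence "card C = p ^ Suc e * k" using lagC cZ by (simp add: algebra_simps)
    hence "p ^ Suc e dvd card C" by simp
    hence "Suc e \<le> multiplicity p (card C)"
      using finC subgroup.one_closed[OF Csub] p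
      by (intro multiplicity_geI) (auto simp: prime_gt_1_nat card_gt_0_iff)
    hence f1: "p ^ Suc e \<le> card PC" unfolding cPC using prime_gt_1_nat[OF p]
      by (intro power_increasing) auto
    have f2: "p ^ e < p ^ Suc e" using prime_gt_1_nat[OF p] by (intro power_strict_increasing) auto
    show False using le1 cZ f1 f2 by linarith
  qed
  have injp: "z = \<one>" if z: "z \<in> Z" and zp: "z [^] card ((\<lambda>g. Z #> g) ` C) = \<one>" for z
  proof -
    have zc: "z \<in> carrier G" using z sub[OF Zsub] by blast
    have d1: "ord z dvd card E" using zp pow_eq_id[OF zc] unfolding E_def by simp
    have "ord z dvd p ^ e" using ord_dvd_subgroup_card[OF fin Zsub z] cZ by simp
    then obtain i where i: "ord z = p ^ i" using divides_primepow_nat[OF p] by blast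
    have "i = 0"
    proof (rule ccontr)
      assume "i \<noteq> 0"
      hence "p dvd ord z" using i by simp
      thus False using d1 pE dvd_trans by blast
    qed
    hence "ord z = 1" using i by simp
    thus ?thesis using ord_eq_1[OF zc] by simp
  qed
  obtain K where Ksub: "subgroup K G" and KC: "K \<subseteq> C" and KZ: "K \<inter> Z = {\<one>}"
    and Kdec: "\<forall>g\<in>C. \<exists>k\<in>K. \<exists>z\<in>Z. g = k \<otimes> z"
    and Knc: "\<forall>g\<in>C. \<forall>k\<in>K. g \<otimes> k \<otimes> inv g \<in> K"
    using central_complement[OF fin Csub Zsub ZC cen injp] by blast
  have Ks: "K \<subseteq> carrier G" using sub[OF Ksub] .
  have RK: "\<exists>r\<in>R. \<exists>k\<in>K. x = r \<otimes> k" if x: "x \<in> carrier G" for x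
  proof -
    obtain r c where rc: "r \<in> R" "c \<in> C" "x = r \<otimes> c" using dec[OF x] by blast
    obtain k z where kz: "k \<in> K" "z \<in> Z" "c = k \<otimes> z" using Kdec rc(2) by blast
    have cc: "r \<in> carrier G" "k \<in> carrier G" "z \<in> carrier G" using rc kz Rs Ks ZR by auto
    have "x = (r \<otimes> z) \<otimes> k" using rc(3) kz(3) cen[OF kz(2) subsetD[OF KC kz(1)]] cc by (simp add: m_assoc)
    moreover have "r \<otimes> z \<in> R" using subgroup.m_closed[OF Rsub rc(1)] kz(2) ZR by blast
    ultimately show ?thesis using kz(1) by blast
  qed
  have RKi: "R \<inter> K = {\<one>}"
  proof
    show "R \<inter> K \<subseteq> {\<one>}" using KZ KC unfolding Z_def by blast
    show "{\<one>} \<subseteq> R \<inter> K" using subgroup.one_closed[OF Rsub] subgroup.one_closed[OF Ksub] by blast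
  qed
  have Knorm: "K \<lhd> G"
    unfolding normal_inv_iff
  proof (intro conjI ballI)
    show "subgroup K G" by (rule Ksub)
    fix x h assume x: "x \<in> carrier G" and h: "h \<in> K"
    obtain r c where rc: "r \<in> R" "c \<in> C" "x = r \<otimes> c" using dec[OF x] by blast
    have cc: "r \<in> carrier G" "c \<in> carrier G" "h \<in> carrier G" using rc h Rs Cs Ks by auto
    define k' where "k' = c \<otimes> h \<otimes> inv c"
    have k': "k' \<in> K" unfolding k'_def using Knc rc(2) h by blast
    have k'c: "k' \<in> carrier G" using k' Ks by blast
    have "x \<otimes> h \<otimes> inv x = r \<otimes> k' \<otimes> inv r" using conj_prod[OF cc] rc(3) unfolding k'_def by simp
    also have "\<dots> = k'" using cc k'c by (simp add: cmCR[OF subsetD[OF KC k'] rc(1), symmetric] m_assoc)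
    finally show "x \<otimes> h \<otimes> inv x \<in> K" using k' by simp
  qed
  have cardRK: "n = card R * card K"
  proof -
    have "(\<lambda>(r, k). r \<otimes> k) ` (R \<times> K) = carrier G"
    proof
      show "(\<lambda>(r, k). r \<otimes> k) ` (R \<times> K) \<subseteq> carrier G" using Rs Ks by auto
      show "carrier G \<subseteq> (\<lambda>(r, k). r \<otimes> k) ` (R \<times> K)" using RK by fastforce
    qed
    moreover have "inj_on (\<lambda>(r, k). r \<otimes> k) (R \<times> K)"
    proof (rule inj_onI, clarify)
      fix r k r' k' assume r: "r \<in> R" and k: "k \<in> K" and r': "r' \<in> R" and k': "k' \<in> K"
        and e: "r \<otimes> k = r' \<otimes> k'"
      have cc: "r \<in> carrier G" "k \<in> carrier G" "r' \<in> carrier G" "k' \<in> carrier G" using r k r' k' Rs Ks by auto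
      have "inv r' \<otimes> r = inv r' \<otimes> (r \<otimes> k) \<otimes> inv k" using cc by (simp add: m_assoc)
      also have "\<dots> = k' \<otimes> inv k" using e cc by (simp add: m_assoc[symmetric])
      finally have eq: "inv r' \<otimes> r = k' \<otimes> inv k" .
      have "inv r' \<otimes> r \<in> R" using subgroup.m_closed[OF Rsub subgroup.m_inv_closed[OF Rsub r'] r] .
      moreover have "k' \<otimes> inv k \<in> K" using subgroup.m_closed[OF Ksub k' subgroup.m_inv_closed[OF Ksub k]] .
      ultimately have i1: "inv r' \<otimes> r = \<one>" using eq RKi by auto
      have "r = r' \<otimes> (inv r' \<otimes> r)" using cc by (simp add: m_assoc[symmetric])
      hence rr: "r = r'" using i1 cc by simp
      hence "k = k'" using e cc by simp
      thus "r = r' \<and> k = k'" using rr by simp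
    qed
    ultimately have "card (carrier G) = card (R \<times> K)" by (metis card_image)
    thus ?thesis unfolding n_def order_def by (simp add: card_cartesian_product)
  qed
  have cK: "card K = m" using cardRK nm cR prime_gt_0_nat[OF p] by simp
  have Op: "O_pi G {p} = R"
  proof (rule O_pi_eq[OF Ggrp Rnorm])
    show "pi_subgroup G {p} R" unfolding pi_subgroup_def
      using Rsub cR prime_dvd_prime_pow[OF _ p] by auto
    fix N assume N: "N \<lhd> G" "pi_subgroup G {p} N"
    show "N \<subseteq> R"
    proof
      fix x assume x: "x \<in> N"
      have Nsub: "subgroup N G" using N(2) unfolding pi_subgroup_def by blast
      have xc: "x \<in> carrier G" using x sub[OF Nsub] by blast
      have "ord x dvd card N" using ord_dvd_subgroup_card[OF fin Nsub x] .
      hence "t = p" if "Factorial_Ring.prime t" "t dvd ord x" for t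
        using that N(2) unfolding pi_subgroup_def using dvd_trans by blast
      thus "x \<in> R" using pelem[OF xc] by blast
    qed
  qed
  have Opp: "O_pi G (primes_except p) = K"
  proof (rule O_pi_eq[OF Ggrp Knorm])
    show "pi_subgroup G (primes_except p) K" unfolding pi_subgroup_def primes_except_def
      using Ksub cK pm by auto
    fix N assume N: "N \<lhd> G" "pi_subgroup G (primes_except p) N"
    show "N \<subseteq> K"
    proof
      fix x assume x: "x \<in> N"
      have Nsub: "subgroup N G" using N(2) unfolding pi_subgroup_def by blast
      have xc: "x \<in> carrier G" using x sub[OF Nsub] by blast
      have oN: "ord x dvd card N" using ord_dvd_subgroup_card[OF fin Nsub x] .
      have rK: "card (rcosets K) = p ^ a"
      proof -
        have "m * card (rcosets K) = m * p ^ a" using sylcard[OF Ksub] cK nm by (simp add: mult.commute)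
        thus ?thesis using m0 by simp
      qed
      have "coprime (ord x) (card (rcosets K))" unfolding rK
      proof (rule coprime_by_primes)
        fix t assume t: "Factorial_Ring.prime t" "t dvd ord x" "t dvd p ^ a"
        have "t = p" using prime_dvd_prime_pow[OF t(1) p t(3)] .
        moreover have "t \<in> primes_except p" using N(2) t oN dvd_trans unfolding pi_subgroup_def by blast
        ultimately show False unfolding primes_except_def by simp
      qed
      thus "x \<in> K" using in_normal_if_coprime[OF fin Knorm xc] by blast
    qed
  qed
  have "set_mult G R K = carrier G"
  proof
    show "set_mult G R K \<subseteq> carrier G" using Rs Ks unfolding set_mult_def by auto
    show "carrier G \<subseteq> set_mult G R K" using RK unfolding set_mult_def by blast
  qed
  thus ?thesis using Op Opp Rnorm Knorm RKi by simp
qed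

theorem proposition3p2:
  fixes G :: "('a, 'b) monoid_scheme" and p q :: nat
  assumes "group G" and "finite (carrier G)"
    and "Factorial_Ring.prime p" and "p dvd order G"
    and "q \<in> prime_divs G - {p}"
    and "\<forall>r \<in> prime_divs G - {p}. q \<le> r"
    and "pr_star G {p} (primes_except p) > real (p + q - 1) / real (p * q)"
  shows "O_pi G {p} \<lhd> G \<and> O_pi G (primes_except p) \<lhd> G
     \<and> O_pi G {p} \<inter> O_pi G (primes_except p) = {monoid.one G}
     \<and> set_mult G (O_pi G {p}) (O_pi G (primes_except p)) = carrier G"
  using group.main_aux assms by blast

end
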